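(* $\mathfrak{t}((c_0^+\setminus \ell^1,\leq ^* ))=\mathfrak{t}$.
   Context: $c_0^+$ is the set of all sequences of positive reals converging to $0$, $\ell^1$ the set of real sequences with convergent sum, so $c_0^+\setminus\ell^1$ is the set of positive null sequences with divergent sum. For $\bar f,\bar g\in c_0^+\setminus\ell^1$, $\bar f\leq^*\bar g$ means $\{n: f_n>g_n\}$ is finite. For an ordering $P$, $\mathfrak{t}(P)$ is the least cardinal $\kappa$ such that there is a decreasing (well-ordered) chain of length $\kappa$ in $P$ with no lower bound in $P$. $\mathfrak{t}$ is the tower number, i.e. $\mathfrak{t}(([\omega]^\omega,\subseteq^* ))$: the least length of a $\subseteq^*$-decreasing well-ordered sequence of infinite subsets of $\omega$ with no infinite pseudo-intersection. *)

theory Defs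
  imports Complex_Main
begin

definition c0plus_not_l1 :: "(nat \<Rightarrow> real) set" where
  "c0plus_not_l1 = {f. (\<forall>n. 0 < f n) \<and> f \<longlonglongrightarrow> 0 \<and> \<not> summable f}"

definition ae_le :: "(nat \<Rightarrow> real) \<Rightarrow> (nat \<Rightarrow> real) \<Rightarrow> bool" where
  "ae_le f g \<longleftrightarrow> finite {n. f n > g n}"

definition inf_subsets :: "nat set set" where
  "inf_subsets = {A. infinite A}"

definition ae_subset :: "nat set \<Rightarrow> nat set \<Rightarrow> bool" where
  "ae_subset A B \<longleftrightarrow> finite (A - B)"

definition unbounded_decr_chain :: "'x set \<Rightarrow> ('x \<Rightarrow> 'x \<Rightarrow> bool) \<Rightarrow> 'i rel \<Rightarrow> bool" where
  "unbounded_decr_chain P le r \<longleftrightarrow> Well_order r \<and>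
     (\<exists>f. (\<forall>i\<in>Field r. f i \<in> P) \<and>
          (\<forall>i j. (i, j) \<in> r \<longrightarrow> le (f j) (f i)) \<and>
          \<not> (\<exists>b\<in>P. \<forall>i\<in>Field r. le b (f i)))"

text \<open>t(P) \<le> kappa: some cardinal lambda \<le> kappa (represented on the carrier type of kappa)
  is the length of an unbounded decreasing chain in P.\<close>
definition t_le :: "'x set \<Rightarrow> ('x \<Rightarrow> 'x \<Rightarrow> bool) \<Rightarrow> 'a rel \<Rightarrow> bool" where
  "t_le P le \<kappa> \<longleftrightarrow> (\<exists>r :: 'a rel. Card_order r \<and> (r, \<kappa>) \<in> ordLeq \<and> unbounded_decr_chain P le r)"

end

theory Submission
  imports Defs "HOL-Library.Countable"
begin

unbundle cardinal_syntax

definition blk :: "nat set \<Rightarrow> nat set" where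
  "blk A = (\<Union>m\<in>A. {m*m..<Suc m * Suc m})"

definition FA :: "nat set \<Rightarrow> nat \<Rightarrow> real" where
  "FA A n = (if n \<in> blk A then 1 / sqrt (real n + 1) else (1/2)^n)"

lemma block_unique:
  assumes "n \<in> {m*m..<Suc m * Suc m}" "n \<in> {k*k..<Suc k * Suc k}"
  shows "m = k"
proof (rule ccontr)
  assume "m \<noteq> k"
  then consider "m < k" | "k < m" by linarith
  then show False
  proof cases
    case 1
    then have "Suc m * Suc m \<le> k * k" by (intro mult_le_mono) auto
    with assms show False by auto
  next
    case 2
    then have "Suc k * Suc k \<le> m * m" by (intro mult_le_mono) auto
    with assms show False by auto
  qed
qed

lemma block_exists: "\<exists>m. n \<in> {m*m..<Suc m * Suc m}"
proof -
  have ex: "\<exists>m. n < Suc m * Suc m" by (rule exI[of _ n]) auto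
  define m where "m = (LEAST m. n < Suc m * Suc m)"
  have 1: "n < Suc m * Suc m" unfolding m_def by (rule LeastI_ex[OF ex])
  have 2: "m * m \<le> n"
  proof (cases m)
    case 0 then show ?thesis by simp
  next
    case (Suc k)
    have "\<not> n < Suc k * Suc k" using Suc unfolding m_def
      by (metis lessI not_less_Least)
    then show ?thesis using Suc by simp
  qed
  show ?thesis using 1 2 by auto
qed

lemma pow_half_le: "(1/2::real)^n \<le> 1 / sqrt (real n + 1)"
proof -
  have "n + 1 \<le> (2::nat)^n" using less_exp[of n] by linarith
  then have "real (n + 1) \<le> real ((2::nat)^n)" by (simp only: of_nat_le_iff)
  then have "real n + 1 \<le> 2^n" by simp
  moreover have "sqrt (real n + 1) \<le> real n + 1"
  proof -
    have s1: "1 \<le> sqrt (real n + 1)" by simp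
    have s2: "sqrt (real n + 1) * sqrt (real n + 1) = real n + 1" by simp
    have "sqrt (real n + 1) * 1 \<le> sqrt (real n + 1) * sqrt (real n + 1)"
      using mult_left_mono[OF s1, of "sqrt (real n + 1)"] by simp
    then show ?thesis using s2 by linarith
  qed
  ultimately have "sqrt (real n + 1) \<le> 2^n" by linarith
  moreover have "0 < sqrt (real n + 1)" by simp
  ultimately have "1 / 2^n \<le> 1 / sqrt (real n + 1)"
    by (intro divide_left_mono) auto
  then show ?thesis by (simp add: power_one_over)
qed

lemma FA_pos: "0 < FA A n"
  unfolding FA_def by auto

lemma FA_le: "FA A n \<le> 1 / sqrt (real n + 1)"
  unfolding FA_def using pow_half_le by auto

lemma FA_c0: "FA A \<longlonglongrightarrow> 0"
proof (rule tendsto_sandwich[of "\<lambda>_. 0" _ _ "\<lambda>n. 1 / sqrt (real n + 1)"])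
  show "\<forall>\<^sub>F n in sequentially. 0 \<le> FA A n" by (intro always_eventually allI) (simp add: FA_pos less_imp_le)
  show "\<forall>\<^sub>F n in sequentially. FA A n \<le> 1 / sqrt (real n + 1)" by (intro always_eventually allI) (simp add: FA_le)
  have "(\<lambda>n. sqrt (inverse (real n + 1))) \<longlonglongrightarrow> sqrt 0"
    by (intro tendsto_real_sqrt) (use LIMSEQ_inverse_real_of_nat in \<open>simp add: add.commute\<close>)
  then show "(\<lambda>n. 1 / sqrt (real n + 1)) \<longlonglongrightarrow> 0"
    by (simp add: real_sqrt_inverse divide_inverse add.commute)
qed auto

lemma FA_block_ge:
  assumes "m \<in> A" "n \<in> {m*m..<Suc m * Suc m}"
  shows "FA A n \<ge> 1 / (real m + 1)"
proof -
  have "n \<in> blk A" using assms unfolding blk_def by auto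
  then have "FA A n = 1 / sqrt (real n + 1)" unfolding FA_def by simp
  moreover have "sqrt (real n + 1) \<le> real m + 1"
  proof -
    have "n + 1 \<le> Suc m * Suc m" using assms by auto
    then have "real (n + 1) \<le> real (Suc m * Suc m)" by (simp only: of_nat_le_iff)
    then have "real n + 1 \<le> (real m + 1) * (real m + 1)" by (simp add: algebra_simps)
    then have "sqrt (real n + 1) \<le> sqrt ((real m + 1) * (real m + 1))" by (rule real_sqrt_le_mono)
    also have "\<dots> = real m + 1" by simp
    finally show ?thesis .
  qed
  moreover have "0 < sqrt (real n + 1)" by simp
  ultimately show ?thesis by (simp add: frac_le)
qed

lemma FA_not_summable:
  assumes "infinite A"
  shows "\<not> summable (FA A)"
proof
  assume "summable (FA A)"
  then obtain N where N: "\<And>m n. m \<ge> N \<Longrightarrow> norm (sum (FA A) {m..<n}) < 1"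
    unfolding summable_Cauchy by (meson zero_less_one)
  obtain m where m: "m \<in> A" "m \<ge> N"
    using assms by (meson finite_nat_set_iff_bounded_le le_cases)
  have "m \<le> m * m" by simp
  then have "norm (sum (FA A) {m*m..<Suc m * Suc m}) < 1" using N[of "m*m" "Suc m * Suc m"] m(2) by linarith
  moreover have "sum (FA A) {m*m..<Suc m * Suc m} \<ge> 1"
  proof -
    have a: "sum (FA A) {m*m..<Suc m * Suc m} \<ge> sum (\<lambda>_. 1 / (real m + 1)) {m*m..<Suc m * Suc m}"
      using FA_block_ge[OF m(1)] by (intro sum_mono) auto
    have b: "sum (\<lambda>_. 1 / (real m + 1)) {m*m..<Suc m * Suc m} = real (2*m+1) / (real m + 1)"
      by (simp add: add_divide_distrib)
    have c: "real (2*m+1) / (real m + 1) \<ge> 1" by (simp add: field_simps)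
    show ?thesis using a b c by linarith
  qed
  ultimately show False by simp
qed

lemma FA_in: "infinite A \<Longrightarrow> FA A \<in> c0plus_not_l1"
  unfolding c0plus_not_l1_def using FA_pos FA_c0 FA_not_summable by auto

lemma finite_blk: "finite S \<Longrightarrow> finite (blk S)"
  unfolding blk_def by auto

lemma FA_mono:
  assumes "finite (A - B)"
  shows "ae_le (FA A) (FA B)"
proof -
  have "{n. FA A n > FA B n} \<subseteq> blk (A - B)"
  proof
    fix n assume n: "n \<in> {n. FA A n > FA B n}"
    show "n \<in> blk (A - B)"
    proof (cases "n \<in> blk A")
      case True
      then obtain m where m: "m \<in> A" "n \<in> {m*m..<Suc m * Suc m}" unfolding blk_def by auto
      have "n \<notin> blk B"
        using n True unfolding FA_def by auto
      then have "m \<notin> B" using m unfolding blk_def by auto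
      then show ?thesis using m unfolding blk_def by auto
    next
      case False
      then show ?thesis using n pow_half_le[of n] unfolding FA_def by (auto split: if_splits)
    qed
  qed
  then show ?thesis unfolding ae_le_def using finite_blk[OF assms] finite_subset by blast
qed

lemma FA_lower:
  assumes g: "g \<in> c0plus_not_l1"
  shows "infinite {m. \<exists>n\<in>{m*m..<Suc m * Suc m}. g n > (1/2)^n}" (is "infinite ?C")
proof
  assume fin: "finite ?C"
  then obtain K where K: "\<And>m. m \<in> ?C \<Longrightarrow> m < K"
    by (meson finite_nat_set_iff_bounded)
  have "summable g"
  proof (rule summable_comparison_test')
    show "summable (\<lambda>n. (1/2::real)^n)" by simp
    fix n assume n: "n \<ge> K * K"
    obtain m where m: "n \<in> {m*m..<Suc m * Suc m}" using block_exists by blast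
    have "m \<ge> K"
    proof (rule ccontr)
      assume "\<not> m \<ge> K"
      then have "Suc m * Suc m \<le> K * K" by (intro mult_le_mono) auto
      with m n show False by auto
    qed
    then have "m \<notin> ?C" using K by force
    then have "\<not> (1/2)^n < g n" using m by blast
    then have "g n \<le> (1/2)^n" by linarith
    moreover have "0 < g n" using g unfolding c0plus_not_l1_def by auto
    ultimately show "norm (g n) \<le> (1/2)^n" by simp
  qed
  then show False using g unfolding c0plus_not_l1_def by auto
qed

lemma FA_lower2:
  assumes g: "ae_le g (FA A)"
  shows "finite ({m. \<exists>n\<in>{m*m..<Suc m * Suc m}. g n > (1/2)^n} - A)"
proof -
  let ?E = "{n. g n > FA A n}"
  have E: "finite ?E" using g unfolding ae_le_def by simp
  have "{m. \<exists>n\<in>{m*m..<Suc m * Suc m}. g n > (1/2)^n} - A \<subseteq> (\<Union>n\<in>?E. {..n})"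
  proof
    fix m assume "m \<in> {m. \<exists>n\<in>{m*m..<Suc m * Suc m}. g n > (1/2)^n} - A"
    then obtain n where n: "n \<in> {m*m..<Suc m * Suc m}" "g n > (1/2)^n" "m \<notin> A" by auto
    have "n \<notin> blk A"
    proof
      assume "n \<in> blk A"
      then obtain k where "k \<in> A" "n \<in> {k*k..<Suc k * Suc k}" unfolding blk_def by auto
      with n block_unique show False by blast
    qed
    then have "FA A n = (1/2)^n" unfolding FA_def by simp
    with n have "n \<in> ?E" by simp
    moreover have "m \<le> n" using n(1) by (metis atLeastLessThan_iff le_square le_trans)
    ultimately show "m \<in> (\<Union>n\<in>?E. {..n})" by auto
  qed
  then show ?thesis using E finite_subset by blast
qed

lemma partA:
  assumes "unbounded_decr_chain inf_subsets ae_subset r"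
  shows "unbounded_decr_chain c0plus_not_l1 ae_le r"
proof -
  from assms obtain A where WO: "Well_order r"
    and A1: "\<forall>i\<in>Field r. A i \<in> inf_subsets"
    and A2: "\<forall>i j. (i, j) \<in> r \<longrightarrow> ae_subset (A j) (A i)"
    and A3: "\<not> (\<exists>b\<in>inf_subsets. \<forall>i\<in>Field r. ae_subset b (A i))"
    unfolding unbounded_decr_chain_def by blast
  show ?thesis unfolding unbounded_decr_chain_def
  proof (intro conjI exI[of _ "\<lambda>i. FA (A i)"])
    show "Well_order r" by fact
    show "\<forall>i\<in>Field r. FA (A i) \<in> c0plus_not_l1"
      using A1 FA_in unfolding inf_subsets_def by auto
    show "\<forall>i j. (i, j) \<in> r \<longrightarrow> ae_le (FA (A j)) (FA (A i))"
      using A2 FA_mono unfolding ae_subset_def by auto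
    show "\<not> (\<exists>b\<in>c0plus_not_l1. \<forall>i\<in>Field r. ae_le b (FA (A i)))"
    proof
      assume "\<exists>b\<in>c0plus_not_l1. \<forall>i\<in>Field r. ae_le b (FA (A i))"
      then obtain g where g: "g \<in> c0plus_not_l1" "\<forall>i\<in>Field r. ae_le g (FA (A i))" by blast
      let ?C = "{m. \<exists>n\<in>{m*m..<Suc m * Suc m}. g n > (1/2)^n}"
      have "?C \<in> inf_subsets" using FA_lower[OF g(1)] unfolding inf_subsets_def by simp
      moreover have "\<forall>i\<in>Field r. ae_subset ?C (A i)"
        using FA_lower2 g(2) unfolding ae_subset_def by blast
      ultimately show False using A3 by blast
    qed
  qed
qed



lemma wo_refl: "Well_order r \<Longrightarrow> x \<in> Field r \<Longrightarrow> (x,x) \<in> r"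
  using wo_rel.REFL[of r] by (auto simp: wo_rel_def refl_on_def)

lemma wo_total: "Well_order r \<Longrightarrow> x \<in> Field r \<Longrightarrow> y \<in> Field r \<Longrightarrow> (x,y) \<in> r \<or> (y,x) \<in> r"
  using wo_rel.TOTALS[of r] by (auto simp: wo_rel_def)

lemma wo_trans: "Well_order r \<Longrightarrow> (x,y) \<in> r \<Longrightarrow> (y,z) \<in> r \<Longrightarrow> (x,z) \<in> r"
  using wo_rel.TRANS[of r] by (auto simp: wo_rel_def trans_def)

lemma wo_antisym: "Well_order r \<Longrightarrow> (x,y) \<in> r \<Longrightarrow> (y,x) \<in> r \<Longrightarrow> x = y"
  using wo_rel.ANTISYM[of r] by (auto simp: wo_rel_def antisym_def)

lemma wo_Refl: "Well_order r \<Longrightarrow> Refl r"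
  by (simp add: well_order_on_def linear_order_on_def partial_order_on_def preorder_on_def)

lemma wo_wf: "Well_order r \<Longrightarrow> wf (r - Id)"
  using wo_rel.WF[of r] by (auto simp: wo_rel_def)

lemma mono_self_ge:
  assumes WO: "Well_order r" and cmp: "\<And>a b. (a,b) \<in> r \<Longrightarrow> (f a, f b) \<in> r"
    and inj: "inj_on f (Field r)" and fld: "f ` Field r \<subseteq> Field r"
  shows "x \<in> Field r \<Longrightarrow> (x, f x) \<in> r"
proof (induction x rule: wf_induct[OF wo_wf[OF WO]])
  case (1 x)
  show ?case
  proof (rule ccontr)
    assume nx: "(x, f x) \<notin> r"
    have fx: "f x \<in> Field r" using fld 1(2) by auto
    then have "(f x, x) \<in> r" using nx wo_total[OF WO 1(2) fx] by auto
    moreover have "f x \<noteq> x" using nx wo_refl[OF WO 1(2)] by auto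
    ultimately have "(f x, x) \<in> r - Id" by auto
    then have a: "(f x, f (f x)) \<in> r" using 1(1) fx by auto
    have b: "(f (f x), f x) \<in> r" using cmp \<open>(f x, x) \<in> r\<close> by auto
    have "f (f x) = f x" using wo_antisym[OF WO a b] by simp
    then have "f x = x" using inj fx 1(2) by (auto dest: inj_onD)
    with \<open>f x \<noteq> x\<close> show False by simp
  qed
qed

lemma Restr_ordLeq:
  assumes WO: "Well_order r"
  shows "Restr r T \<le>o r"
proof (rule ccontr)
  let ?r' = "Restr r T"
  have WO': "Well_order ?r'" using Well_order_Restr[OF WO] .
  assume "\<not> ?r' \<le>o r"
  then have "r <o ?r'" using not_ordLeq_iff_ordLess[OF WO WO'] by simp
  then obtain f where emb: "embed r ?r' f" and nb: "\<not> bij_betw f (Field r) (Field ?r')"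
    unfolding ordLess_def embedS_def by auto
  have cmp: "\<And>a b. (a,b) \<in> r \<Longrightarrow> (f a, f b) \<in> ?r'"
    using embed_compat[OF emb] unfolding compat_def by auto
  have inj: "inj_on f (Field r)" using embed_inj_on[OF WO emb] .
  have fld: "f ` Field r \<subseteq> Field ?r'" using embed_Field[OF emb] .
  have ofil: "ofilter ?r' (f ` Field r)" using embed_Field_ofilter[OF WO WO' emb] .
  have FT: "Field ?r' \<subseteq> Field r \<inter> T" unfolding Field_def by auto
  have "f ` Field r \<noteq> Field ?r'" using nb inj fld unfolding bij_betw_def by auto
  then obtain t where t: "t \<in> Field ?r'" "t \<notin> f ` Field r" using fld by auto
  have tr: "t \<in> Field r" "t \<in> T" using t FT by auto
  have ge: "(t, f t) \<in> r"
    using mono_self_ge[OF WO, of f t] cmp inj fld FT tr by auto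
  have "f t \<in> T" using fld FT tr by auto
  then have "(t, f t) \<in> ?r'" using ge tr by auto
  then have "t \<in> under ?r' (f t)" unfolding under_def by auto
  moreover have "f t \<in> f ` Field r" using tr by auto
  ultimately have "t \<in> f ` Field r" using ofil unfolding ofilter_def by blast
  with t show False by simp
qed

definition PI :: "'i rel \<Rightarrow> bool" where
  "PI W \<longleftrightarrow> (\<forall>A::'i \<Rightarrow> nat set. (\<forall>i\<in>Field W. infinite (A i)) \<and> (\<forall>i j. (i,j)\<in>W \<longrightarrow> finite (A j - A i))
      \<longrightarrow> (\<exists>B. infinite B \<and> (\<forall>i\<in>Field W. finite (B - A i))))"

lemma not_Card_order_less:
  assumes WO: "Well_order W" and nc: "\<not> Card_order W"
  shows "|Field W| <o W"
proof -
  have co: "Card_order |Field W|" by (rule card_of_Card_order)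
  have wc: "Well_order |Field W|" by (rule card_of_Well_order)
  have "\<not> W \<le>o |Field W|"
  proof
    assume le: "W \<le>o |Field W|"
    have "Card_order W" unfolding card_order_on_def
    proof (intro conjI allI impI)
      show "well_order_on (Field W) W" using WO by simp
      fix r' assume "well_order_on (Field W) r'"
      then have "|Field W| \<le>o r'" using card_of_least by blast
      then show "W \<le>o r'" using le ordLeq_transitive by blast
    qed
    with nc show False by simp
  qed
  then show ?thesis using not_ordLeq_iff_ordLess[OF wc WO] by simp
qed

lemma B2:
  fixes \<kappa> :: "'a rel"
  assumes H: "\<And>r::'a rel. Card_order r \<Longrightarrow> r \<le>o \<kappa> \<Longrightarrow> PI r"
  shows "Well_order W \<Longrightarrow> W \<le>o \<kappa> \<Longrightarrow> PI (W::'a rel)"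
proof (induction W rule: wf_induct[OF wf_ordLess])
  case (1 W)
  show ?case
  proof (cases "Card_order W")
    case True then show ?thesis using H[OF True 1(3)] by simp
  next
    case False
    note WO = 1(2)
    let ?c = "|Field W|"
    have cW: "?c <o W" using not_Card_order_less[OF WO False] .
    have wc: "Well_order ?c" by (rule card_of_Well_order)
    have Fc: "Field ?c = Field W" by (rule Field_card_of)
    let ?T = "{x \<in> Field W. \<forall>z. (z,x) \<in> ?c \<longrightarrow> (z,x) \<in> W}"
    let ?W' = "Restr ?c ?T"
    have "?W' \<le>o ?c" using Restr_ordLeq[OF wc] .
    then have lt: "?W' <o W" using ordLeq_ordLess_trans[OF _ cW] by blast
    have le: "?W' \<le>o \<kappa>" using ordLeq_transitive[OF ordLess_imp_ordLeq[OF lt] 1(3)] .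
    have wW': "Well_order ?W'" using Well_order_Restr[OF wc] .
    have PIW': "PI ?W'" using 1(1)[rule_format, OF lt wW' le] .
    have FW': "Field ?W' = ?T"
      by (rule Refl_Field_Restr2) (use wo_Refl[OF wc] Fc in auto)
    show ?thesis unfolding PI_def
    proof (intro allI impI)
      fix A :: "'a \<Rightarrow> nat set"
      assume A: "(\<forall>i\<in>Field W. infinite (A i)) \<and> (\<forall>i j. (i,j)\<in>W \<longrightarrow> finite (A j - A i))"
      have "\<exists>B. infinite B \<and> (\<forall>i\<in>Field ?W'. finite (B - A i))"
        using PIW' unfolding PI_def
      proof (elim allE impE)
        show "(\<forall>i\<in>Field ?W'. infinite (A i)) \<and> (\<forall>i j. (i,j)\<in>?W' \<longrightarrow> finite (A j - A i))"
          using A FW' by auto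
      qed
      then obtain B where B: "infinite B" "\<forall>i\<in>?T. finite (B - A i)" using FW' by auto
      show "\<exists>B. infinite B \<and> (\<forall>i\<in>Field W. finite (B - A i))"
      proof (intro exI conjI ballI)
        show "infinite B" by fact
        fix w assume w: "w \<in> Field W"
        let ?S = "{x \<in> Field W. (w,x) \<in> W}"
        have "w \<in> ?S" using w wo_refl[OF WO w] by auto
        then obtain z where z: "z \<in> ?S" "\<And>y. (y,z) \<in> ?c - Id \<Longrightarrow> y \<notin> ?S"
          using wfE_min[OF wo_wf[OF wc] \<open>w \<in> ?S\<close>] by blast
        have "z \<in> ?T"
        proof (intro CollectI conjI allI impI)
          show "z \<in> Field W" using z by auto
          fix y assume y: "(y,z) \<in> ?c"
          show "(y,z) \<in> W"
          proof (cases "y = z")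
            case True then show ?thesis using wo_refl[OF WO] z by auto
          next
            case False
            then have "y \<notin> ?S" using z(2) y by auto
            moreover have yF: "y \<in> Field W" using FieldI1[of y z ?c] y Fc by simp
            ultimately have "(w,y) \<notin> W" by auto
            then have yw: "(y,w) \<in> W" using wo_total[OF WO yF w] by auto
            have wz: "(w,z) \<in> W" using z(1) by simp
            show ?thesis using wo_trans[OF WO yw wz] .
          qed
        qed
        then have "finite (B - A z)" using B by auto
        moreover have "finite (A z - A w)" using A z(1) by auto
        ultimately have "finite ((B - A z) \<union> (A z - A w))" by simp
        then show "finite (B - A w)" by (rule finite_subset[rotated]) auto
      qed
    qed
  qed
qed


definition ctrl :: "(nat \<Rightarrow> nat) \<Rightarrow> nat set \<Rightarrow> bool" where
  "ctrl g A \<longleftrightarrow> finite {(a,b). a \<in> A \<and> b \<in> A \<and> a < b \<and> (\<exists>n\<le>a. b \<le> g n)}"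

lemma ctrl_ae:
  assumes c: "ctrl g A" and f: "finite (B - A)"
  shows "ctrl g B"
proof -
  let ?F = "B - A"
  let ?K2 = "Max (insert 0 ?F)"
  let ?K1 = "Max (g ` {..?K2})"
  let ?badA = "{(a,b). a \<in> A \<and> b \<in> A \<and> a < b \<and> (\<exists>n\<le>a. b \<le> g n)}"
  let ?badB = "{(a,b). a \<in> B \<and> b \<in> B \<and> a < b \<and> (\<exists>n\<le>a. b \<le> g n)}"
  have sub: "?badB \<subseteq> ?badA \<union> (?F \<times> {..?K1}) \<union> ({..?K2} \<times> ?F)"
  proof
    fix p assume p: "p \<in> ?badB"
    obtain a b where pab: "p = (a,b)" by force
    obtain n where ab: "a \<in> B" "b \<in> B" "a < b" "n \<le> a" "b \<le> g n" using p pab by auto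
    show "p \<in> ?badA \<union> (?F \<times> {..?K1}) \<union> ({..?K2} \<times> ?F)"
    proof (cases "a \<in> A")
      case False
      then have aF: "a \<in> ?F" using ab by simp
      then have "a \<le> ?K2" using f by (intro Max_ge) auto
      then have "n \<le> ?K2" using ab by linarith
      then have "g n \<le> ?K1" by (intro Max_ge) auto
      then have "b \<le> ?K1" using ab by linarith
      then have "p \<in> ?F \<times> {..?K1}" using aF pab by simp
      then show ?thesis by blast
    next
      case aA: True
      show ?thesis
      proof (cases "b \<in> A")
        case True
        then have "p \<in> ?badA" using ab aA pab by blast
        then show ?thesis by blast
      next
        case False
        then have bF: "b \<in> ?F" using ab by simp
        then have "b \<le> ?K2" using f by (intro Max_ge) auto
        then have "a \<le> ?K2" using ab by linarith
        then have "p \<in> {..?K2} \<times> ?F" using bF pab by simp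
        then show ?thesis by blast
      qed
    qed
  qed
  have f1: "finite ?badA" using c unfolding ctrl_def .
  have f2: "finite (?F \<times> {..?K1})" using f by simp
  have f3: "finite ({..?K2} \<times> ?F)" using f by simp
  have "finite ?badB" using finite_subset[OF sub] f1 f2 f3 by blast
  then show ?thesis unfolding ctrl_def .
qed

lemma infinite_gt: "infinite (S::nat set) \<Longrightarrow> \<exists>x\<in>S. x > m"
  using finite_nat_set_iff_bounded_le by (meson not_le)

lemma ctrl_exists:
  assumes B: "infinite B"
  shows "\<exists>A\<subseteq>B. infinite A \<and> ctrl g A"
proof -
  define M where "M x = Max (g ` {..x}) + x" for x
  define nx where "nx x = (LEAST y. y \<in> B \<and> y > M x)" for x
  have nx: "nx x \<in> B \<and> nx x > M x" for x
    unfolding nx_def by (rule LeastI_ex) (use infinite_gt[OF B] in blast)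
  obtain a0 where a0: "a0 \<in> B" using B by (metis finite.emptyI ex_in_conv)
  define a where "a k = (nx ^^ k) a0" for k
  have aS: "a (Suc k) = nx (a k)" for k unfolding a_def by simp
  have aB: "a k \<in> B" for k by (cases k) (auto simp: aS nx a0 a_def[of 0])
  have Mge: "M x \<ge> x" for x unfolding M_def by simp
  have sm: "strict_mono a"
    unfolding strict_mono_Suc_iff by (metis aS nx Mge le_less_trans)
  have key: "i < j \<Longrightarrow> a j > M (a i)" for i j
  proof -
    assume "i < j"
    then have "Suc i \<le> j" by simp
    then have "a (Suc i) \<le> a j" using sm strict_mono_less_eq by blast
    then show ?thesis using nx aS by (metis less_le_trans)
  qed
  let ?A = "range a"
  have "infinite ?A" using finite_imageD[of a UNIV] strict_mono_imp_inj_on[OF sm] infinite_UNIV_nat by blast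
  moreover have "?A \<subseteq> B" using aB by auto
  moreover have "ctrl g ?A"
  proof -
    have E: "{(x,y). x \<in> ?A \<and> y \<in> ?A \<and> x < y \<and> (\<exists>n\<le>x. y \<le> g n)} = {}"
    proof (clarsimp)
      fix i j n assume ij: "a i < a j" "n \<le> a i" "a j \<le> g n"
      have "i < j" using ij sm by (metis strict_mono_less)
      then have "a j > M (a i)" using key by simp
      moreover have "g n \<le> Max (g ` {..a i})" using ij by (intro Max_ge) auto
      ultimately show False using ij unfolding M_def by linarith
    qed
    show ?thesis unfolding ctrl_def E by simp
  qed
  ultimately show ?thesis by blast
qed

lemma ctrl_bound:
  assumes inf: "infinite D" and c: "ctrl g D"
  shows "finite {n. g n > (LEAST y. y \<in> D \<and> y > (LEAST x. x \<in> D \<and> x \<ge> n))}"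
proof -
  let ?bad = "{(a,b). a \<in> D \<and> b \<in> D \<and> a < b \<and> (\<exists>n\<le>a. b \<le> g n)}"
  have fb: "finite (fst ` ?bad)" using c unfolding ctrl_def by simp
  have "{n. g n > (LEAST y. y \<in> D \<and> y > (LEAST x. x \<in> D \<and> x \<ge> n))} \<subseteq> {..Max (insert 0 (fst ` ?bad))}"
  proof
    fix n assume n: "n \<in> {n. g n > (LEAST y. y \<in> D \<and> y > (LEAST x. x \<in> D \<and> x \<ge> n))}"
    define a where "a = (LEAST x. x \<in> D \<and> x \<ge> n)"
    define b where "b = (LEAST y. y \<in> D \<and> y > a)"
    have a: "a \<in> D \<and> a \<ge> n" unfolding a_def
      by (rule LeastI_ex) (use infinite_gt[OF inf, of n] in \<open>auto intro: less_imp_le\<close>)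
    have b: "b \<in> D \<and> b > a" unfolding b_def
      by (rule LeastI_ex) (use infinite_gt[OF inf, of a] in auto)
    have "g n > b" using n unfolding a_def b_def by simp
    then have "(a,b) \<in> ?bad" using a b by auto
    then have "a \<in> fst ` ?bad" by force
    then have "a \<le> Max (insert 0 (fst ` ?bad))" using fb by (intro Max_ge) auto
    then show "n \<in> {..Max (insert 0 (fst ` ?bad))}" using a by auto
  qed
  then show ?thesis using finite_subset by blast
qed

lemma dominate:
  fixes r :: "'a rel" and h :: "'a \<Rightarrow> nat \<Rightarrow> nat"
  assumes WO: "Well_order r" and PIall: "\<And>D. PI (Restr r D)"
  shows "\<exists>H. \<forall>i\<in>Field r. finite {n. h i n > H n}"
proof -
  define AP where "AP = {G :: ('a \<times> nat set) set.
      (\<forall>i X Y. (i,X)\<in>G \<and> (i,Y)\<in>G \<longrightarrow> X=Y) \<and>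
      (\<forall>i X. (i,X)\<in>G \<longrightarrow> i \<in> Field r \<and> infinite X \<and> ctrl (h i) X) \<and>
      (\<forall>i X j. (i,X)\<in>G \<and> (j,i) \<in> r \<longrightarrow> (\<exists>Y. (j,Y)\<in>G)) \<and>
      (\<forall>i X j Y. (i,X)\<in>G \<and> (j,Y)\<in>G \<and> (i,j)\<in>r \<longrightarrow> finite (Y - X))}"
  have "\<exists>M\<in>AP. \<forall>X\<in>AP. M \<subseteq> X \<longrightarrow> X = M"
  proof (rule Zorn_Lemma, intro ballI)
    fix C assume C: "C \<in> chains AP"
    then have CA: "C \<subseteq> AP" and ch: "\<And>G1 G2. G1 \<in> C \<Longrightarrow> G2 \<in> C \<Longrightarrow> G1 \<subseteq> G2 \<or> G2 \<subseteq> G1"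
      unfolding chains_def chain_subset_def by auto
    have two: "\<exists>G\<in>C. p \<in> G \<and> q \<in> G" if pC: "p \<in> \<Union>C" and qC: "q \<in> \<Union>C" for p q
    proof -
      obtain G1 where "G1 \<in> C" "p \<in> G1" using pC by blast
      moreover obtain G2 where "G2 \<in> C" "q \<in> G2" using qC by blast
      ultimately show ?thesis using ch[of G1 G2] by blast
    qed
    show "\<Union>C \<in> AP" unfolding AP_def
    proof (intro CollectI conjI allI impI)
      fix i X Y assume "(i,X)\<in>\<Union>C \<and> (i,Y)\<in>\<Union>C"
      then obtain G where "G \<in> C" "(i,X) \<in> G" "(i,Y) \<in> G" using two by blast
      then show "X = Y" using CA unfolding AP_def by blast
    next
      fix i X assume "(i,X)\<in>\<Union>C"
      then obtain G where "G \<in> C" "(i,X) \<in> G" by auto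
      then show "i \<in> Field r" "infinite X" "ctrl (h i) X" using CA unfolding AP_def by blast+
    next
      fix i X j assume "(i,X)\<in>\<Union>C \<and> (j,i) \<in> r"
      then obtain G where "G \<in> C" "(i,X) \<in> G" "(j,i) \<in> r" by auto
      then have "\<exists>Y. (j,Y)\<in>G" using CA unfolding AP_def by blast
      then show "\<exists>Y. (j,Y)\<in>\<Union>C" using \<open>G \<in> C\<close> by auto
    next
      fix i X j Y assume a: "(i,X)\<in>\<Union>C \<and> (j,Y)\<in>\<Union>C \<and> (i,j)\<in>r"
      then obtain G where "G \<in> C" "(i,X) \<in> G" "(j,Y) \<in> G" using two by blast
      then show "finite (Y - X)" using CA a unfolding AP_def by blast
    qed
  qed
  then obtain M where M: "M \<in> AP" and Mmax: "\<And>X. X \<in> AP \<Longrightarrow> M \<subseteq> X \<Longrightarrow> X = M" by blast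
  have Mfun: "\<And>i X Y. (i,X)\<in>M \<Longrightarrow> (i,Y)\<in>M \<Longrightarrow> X=Y"
    and Mloc: "\<And>i X. (i,X)\<in>M \<Longrightarrow> i \<in> Field r \<and> infinite X \<and> ctrl (h i) X"
    and Mdown: "\<And>i X j. (i,X)\<in>M \<Longrightarrow> (j,i) \<in> r \<Longrightarrow> (\<exists>Y. (j,Y)\<in>M)"
    and Mdec: "\<And>i X j Y. (i,X)\<in>M \<Longrightarrow> (j,Y)\<in>M \<Longrightarrow> (i,j)\<in>r \<Longrightarrow> finite (Y - X)"
    using M unfolding AP_def by blast+
  define dom where "dom = fst ` M"
  define phi where "phi i = (SOME X. (i,X) \<in> M)" for i
  have phi: "i \<in> dom \<Longrightarrow> (i, phi i) \<in> M" for i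
    unfolding dom_def phi_def by (rule someI_ex) force
  have domF: "dom \<subseteq> Field r" using Mloc unfolding dom_def by force
  have FRd: "Field (Restr r dom) = dom"
    by (rule Refl_Field_Restr2) (use wo_Refl[OF WO] domF in auto)
  have PIdom: "\<exists>B. infinite B \<and> (\<forall>i\<in>dom. finite (B - phi i))" for dummy :: bool
  proof -
    have "PI (Restr r dom)" by (rule PIall)
    then have "\<exists>B. infinite B \<and> (\<forall>i\<in>Field (Restr r dom). finite (B - phi i))"
      unfolding PI_def
    proof (elim allE impE)
      show "(\<forall>i\<in>Field (Restr r dom). infinite (phi i)) \<and>
            (\<forall>i j. (i, j) \<in> Restr r dom \<longrightarrow> finite (phi j - phi i))"
        using FRd phi Mloc Mdec by blast
    qed
    then show ?thesis using FRd by simp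
  qed
  have total: "dom = Field r"
  proof (rule ccontr)
    assume "dom \<noteq> Field r"
    then obtain x where "x \<in> Field r - dom" using domF by auto
    then obtain al where al: "al \<in> Field r - dom" and almin: "\<And>y. (y, al) \<in> r - Id \<Longrightarrow> y \<notin> Field r - dom"
      using wfE_min[OF wo_wf[OF WO]] by metis
    obtain B where B: "infinite B" "\<forall>i\<in>dom. finite (B - phi i)" using PIdom by blast
    obtain A where A: "A \<subseteq> B" "infinite A" "ctrl (h al) A" using ctrl_exists[OF B(1)] by blast
    let ?M' = "insert (al, A) M"
    have "?M' \<in> AP" unfolding AP_def
    proof (intro CollectI conjI allI impI)
      fix i X Y assume "(i,X)\<in>?M' \<and> (i,Y)\<in>?M'"
      then show "X = Y" using Mfun al unfolding dom_def by (auto simp: rev_image_eqI)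
    next
      fix i X assume "(i,X)\<in>?M'"
      then show "i \<in> Field r" "infinite X" "ctrl (h i) X" using Mloc al A by auto
    next
      fix i X j assume a: "(i,X)\<in>?M' \<and> (j,i) \<in> r"
      show "\<exists>Y. (j,Y)\<in>?M'"
      proof (cases "i = al")
        case True
        show ?thesis
        proof (cases "j = al")
          case True then show ?thesis by auto
        next
          case False
          then have "(j, al) \<in> r - Id" using a \<open>i = al\<close> by auto
          then have "j \<notin> Field r - dom" using almin by blast
          moreover have "j \<in> Field r" using a by (auto simp: Field_def)
          ultimately have "j \<in> dom" by auto
          then show ?thesis using phi by blast
        qed
      next
        case False
        then have "(i,X) \<in> M" using a by auto
        then show ?thesis using Mdown a by blast
      qed
    next
      fix i X j Y assume a: "(i,X)\<in>?M' \<and> (j,Y)\<in>?M' \<and> (i,j)\<in>r"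
      show "finite (Y - X)"
      proof (cases "(j,Y) = (al,A)")
        case True
        show ?thesis
        proof (cases "(i,X) = (al,A)")
          case True then show ?thesis using \<open>(j,Y) = (al,A)\<close> by simp
        next
          case False
          then have iM: "(i,X) \<in> M" using a by auto
          then have "i \<in> dom" unfolding dom_def by force
          then have "X = phi i" using Mfun iM phi by blast
          then have "finite (B - X)" using B \<open>i \<in> dom\<close> by simp
          moreover have "Y - X \<subseteq> B - X" using True A(1) by auto
          ultimately show ?thesis using finite_subset by blast
        qed
      next
        case False
        then have jM: "(j,Y) \<in> M" using a by auto
        show ?thesis
        proof (cases "(i,X) = (al,A)")
          case True
          then have "(al, j) \<in> r" using a by simp
          then have "\<exists>Z. (al,Z) \<in> M" using Mdown jM by blast
          then have "al \<in> dom" unfolding dom_def by force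
          then show ?thesis using al by simp
        next
          case False
          then show ?thesis using a jM Mdec by blast
        qed
      qed
    qed
    moreover have "M \<subseteq> ?M'" by auto
    ultimately have "?M' = M" using Mmax by blast
    then have "al \<in> dom" unfolding dom_def by force
    then show False using al by simp
  qed
  obtain D where D: "infinite D" "\<forall>i\<in>Field r. finite (D - phi i)" using PIdom total by blast
  have cD: "ctrl (h i) D" if i: "i \<in> Field r" for i
  proof -
    have "(i, phi i) \<in> M" using phi total i by auto
    then have "ctrl (h i) (phi i)" using Mloc by blast
    moreover have "finite (D - phi i)" using D i by auto
    ultimately show ?thesis by (rule ctrl_ae)
  qed
  show ?thesis
    by (intro exI[of _ "\<lambda>n. LEAST y. y \<in> D \<and> y > (LEAST x. x \<in> D \<and> x \<ge> n)"] ballI ctrl_bound[OF D(1) cD])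
qed


definition val :: "nat \<Rightarrow> real" where
  "val c = (if c = 0 then 0 else (1/2)^(c - 1))"

definition cd :: "real \<Rightarrow> nat \<Rightarrow> nat" where
  "cd v K = (let k = (LEAST k. (1/2::real)^k \<le> v) in if k \<le> K then Suc k else 0)"

lemma half_pow_ex: "0 < v \<Longrightarrow> \<exists>k. (1/2::real)^k \<le> v"
  using real_arch_pow_inv[of v "1/2::real"] by (auto intro: less_imp_le)

lemma val_nonneg: "val c \<ge> 0"
  unfolding val_def by auto

lemma cd_le: assumes "0 < v" shows "val (cd v K) \<le> v"
proof -
  define k where "k = (LEAST k. (1/2::real)^k \<le> v)"
  have k: "(1/2::real)^k \<le> v" unfolding k_def by (rule LeastI_ex[OF half_pow_ex[OF assms]])
  show ?thesis using k assms unfolding cd_def val_def k_def[symmetric] Let_def by auto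
qed

lemma cd_bound: "cd v K \<le> Suc K"
  unfolding cd_def Let_def by auto

lemma cd_ge: assumes "0 < v" "v \<le> 1" shows "val (cd v K) \<ge> v/2 - (1/2)^K"
proof -
  define k where "k = (LEAST k. (1/2::real)^k \<le> v)"
  have k: "(1/2::real)^k \<le> v" unfolding k_def by (rule LeastI_ex[OF half_pow_ex[OF assms(1)]])
  have kmin: "\<And>j. j < k \<Longrightarrow> \<not> (1/2::real)^j \<le> v" unfolding k_def by (rule not_less_Least)
  show ?thesis
  proof (cases "k \<le> K")
    case True
    then have vc: "val (cd v K) = (1/2)^k" unfolding cd_def val_def k_def[symmetric] Let_def by simp
    show ?thesis
    proof (cases k)
      case 0
      have h0: "(0::real) \<le> (1/2)^K" by simp
      have "val (cd v K) = 1" using vc \<open>k = 0\<close> by simp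
      then show ?thesis using assms h0 by linarith
    next
      case (Suc j)
      then have "v < (1/2)^j" using kmin[of j] by auto
      then have "v/2 < (1/2)^k" using Suc by simp
      have h0: "(0::real) \<le> (1/2)^K" by simp
      show ?thesis using vc h0 \<open>v/2 < (1/2)^k\<close> by linarith
    qed
  next
    case False
    then have vc: "val (cd v K) = 0" unfolding cd_def val_def k_def[symmetric] Let_def by simp
    have "v < (1/2)^K" using kmin[of K] False by auto
    moreover have "(0::real) \<le> (1/2)^K" by simp
    ultimately show ?thesis using vc by linarith
  qed
qed

definition Jb :: "(nat \<Rightarrow> nat) \<Rightarrow> nat \<Rightarrow> nat set" where
  "Jb t m = {t m..<t (Suc m)}"

definition Kt :: "(nat \<Rightarrow> nat) \<Rightarrow> nat \<Rightarrow> nat" where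
  "Kt t m = 2 * t (Suc m) + 1"

definition Obj :: "(nat \<Rightarrow> nat) \<Rightarrow> (nat \<Rightarrow> real) \<Rightarrow> (nat \<times> nat list) set" where
  "Obj t f = {(m, ks). length ks = t (Suc m) - t m \<and> set ks \<subseteq> {..Suc (Kt t m)} \<and>
      (\<forall>n\<in>Jb t m. val (ks ! (n - t m)) \<le> f n) \<and> sum (\<lambda>n. val (ks ! (n - t m))) (Jb t m) \<ge> 1/2}"

definition cks :: "(nat \<Rightarrow> nat) \<Rightarrow> (nat \<Rightarrow> real) \<Rightarrow> nat \<Rightarrow> nat list" where
  "cks t f m = map (\<lambda>j. cd (f (t m + j)) (Kt t m)) [0..<t (Suc m) - t m]"

lemma small_pow: "real T * (1/2)^(2*T+1) \<le> 1/2"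
proof -
  have "real T \<le> 2^T"
  proof -
    have "T < 2^T" by (rule less_exp)
    then show ?thesis by (metis less_imp_le of_nat_le_iff of_nat_numeral of_nat_power)
  qed
  then have h1: "real T * (1/2)^T \<le> 1"
    by (simp add: power_one_over field_simps)
  have h2: "(1/2::real)^T \<le> 1" by (simp add: power_le_one)
  have b0: "0 \<le> (1/2::real)^T" by simp
  have a: "(real T * (1/2)^T) * (1/2::real)^T \<le> 1"
    by (rule mult_le_one[OF h1 b0 h2])
  have pe: "(1/2::real)^(2*T+1) = (1/2)^T * (1/2)^T * (1/2)"
    by (simp only: power_add mult_2 power_one_right)
  have eq: "real T * (1/2::real)^(2*T+1) = (real T * (1/2)^T) * (1/2)^T * (1/2)"
    unfolding pe by (simp only: mult.assoc)
  have "(real T * (1/2)^T) * (1/2::real)^T * (1/2) \<le> 1 * (1/2)"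
    by (rule mult_right_mono[OF a]) simp
  then show ?thesis using eq by linarith
qed

lemma cks_in:
  assumes sm: "strict_mono t"
    and pos: "\<forall>n\<in>Jb t m. 0 < f n \<and> f n \<le> 1" and big: "sum f (Jb t m) \<ge> 2"
  shows "(m, cks t f m) \<in> Obj t f"
proof -
  let ?K = "Kt t m"
  have tm: "t m < t (Suc m)" using sm by (simp add: strict_mono_def)
  have nth: "cks t f m ! (n - t m) = cd (f n) ?K" if "n \<in> Jb t m" for n
    using that unfolding cks_def Jb_def by auto
  have "sum (\<lambda>n. val (cks t f m ! (n - t m))) (Jb t m) \<ge> sum (\<lambda>n. f n / 2 - (1/2)^?K) (Jb t m)"
    using nth pos cd_ge by (intro sum_mono) auto
  moreover have "sum (\<lambda>n. f n / 2 - (1/2)^?K) (Jb t m) = sum f (Jb t m) / 2 - real (card (Jb t m)) * (1/2)^?K"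
    by (simp add: sum_subtractf sum_divide_distrib)
  moreover have "real (card (Jb t m)) * (1/2)^?K \<le> 1/2"
  proof -
    have "card (Jb t m) \<le> t (Suc m)" unfolding Jb_def by simp
    then have "real (card (Jb t m)) * (1/2)^?K \<le> real (t (Suc m)) * (1/2)^?K"
      by (intro mult_right_mono) auto
    also have "\<dots> \<le> 1/2" unfolding Kt_def by (rule small_pow)
    finally show ?thesis .
  qed
  ultimately have S: "sum (\<lambda>n. val (cks t f m ! (n - t m))) (Jb t m) \<ge> 1/2" using big by linarith
  have "set (cks t f m) \<subseteq> {..Suc ?K}" unfolding cks_def using cd_bound by auto
  moreover have "length (cks t f m) = t (Suc m) - t m" unfolding cks_def by simp
  moreover have "\<forall>n\<in>Jb t m. val (cks t f m ! (n - t m)) \<le> f n" using nth pos cd_le by auto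
  ultimately show ?thesis using S unfolding Obj_def by auto
qed

lemma sm_ge: "strict_mono (t::nat\<Rightarrow>nat) \<Longrightarrow> m \<le> t m"
  by (simp add: strict_mono_imp_increasing)

lemma col_finite: "finite {(m, ks). m \<le> M \<and> length ks = t (Suc m) - t m \<and> set ks \<subseteq> {..Suc (Kt t m)}}"
proof -
  have "{(m, ks). m \<le> M \<and> length ks = t (Suc m) - t m \<and> set ks \<subseteq> {..Suc (Kt t m)}}
     \<subseteq> (\<Union>m\<le>M. {m} \<times> {ks. set ks \<subseteq> {..Suc (Kt t m)} \<and> length ks = t (Suc m) - t m})" by auto
  moreover have "finite (\<Union>m\<le>M. {m} \<times> {ks. set ks \<subseteq> {..Suc (Kt t m)} \<and> length ks = t (Suc m) - t m})"
    by (intro finite_UN_I finite_cartesian_product finite_lists_length_eq) auto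
  ultimately show ?thesis using finite_subset by blast
qed

lemma Obj_fst_finite:
  assumes "X \<subseteq> Obj t f" "finite (fst ` X)"
  shows "finite X"
proof -
  define M where "M = Max (insert 0 (fst ` X))"
  have "X \<subseteq> {(m, ks). m \<le> M \<and> length ks = t (Suc m) - t m \<and> set ks \<subseteq> {..Suc (Kt t m)}}"
  proof
    fix x assume x: "x \<in> X"
    then have "fst x \<le> M" unfolding M_def using assms(2) by (intro Max_ge) auto
    then show "x \<in> {(m, ks). m \<le> M \<and> length ks = t (Suc m) - t m \<and> set ks \<subseteq> {..Suc (Kt t m)}}"
      using x assms(1) unfolding Obj_def by auto
  qed
  then show ?thesis using col_finite finite_subset by blast
qed

lemma Obj_diff:
  assumes sm: "strict_mono t" and fg: "finite {n. f n > g n}"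
  shows "finite (Obj t f - Obj t g)"
proof -
  let ?E = "{n. f n > g n}"
  have "fst ` (Obj t f - Obj t g) \<subseteq> (\<Union>n\<in>?E. {..n})"
  proof
    fix m assume "m \<in> fst ` (Obj t f - Obj t g)"
    then obtain ks where a: "(m,ks) \<in> Obj t f" "(m,ks) \<notin> Obj t g" by auto
    then obtain n where n: "n \<in> Jb t m" "val (ks ! (n - t m)) > g n" "val (ks ! (n - t m)) \<le> f n"
      unfolding Obj_def by auto
    then have "n \<in> ?E" by simp
    moreover have "m \<le> n" using n(1) sm_ge[OF sm, of m] unfolding Jb_def by auto
    ultimately show "m \<in> (\<Union>n\<in>?E. {..n})" by auto
  qed
  then have "finite (fst ` (Obj t f - Obj t g))" using fg finite_subset by blast
  then show ?thesis using Obj_fst_finite[of "Obj t f - Obj t g"] by blast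
qed


lemma partial_sum_big:
  assumes f: "f \<in> c0plus_not_l1"
  shows "\<exists>q>p. sum f {p..<q} \<ge> 2"
proof (rule ccontr)
  assume nb: "\<not> (\<exists>q>p. sum f {p..<q} \<ge> 2)"
  have pos: "\<And>n. 0 \<le> f n" using f unfolding c0plus_not_l1_def by (auto intro: less_imp_le)
  have "summable f"
  proof (rule bounded_imp_summable[OF pos])
    fix n
    have "sum f {..n} \<le> sum f {..<max p (Suc n)}"
      using pos by (intro sum_mono2) auto
    also have "\<dots> = sum f {0..<p} + sum f {p..<max p (Suc n)}"
      by (simp add: atLeast0LessThan[symmetric] sum.atLeastLessThan_concat)
    also have "sum f {p..<max p (Suc n)} \<le> 2"
    proof (cases "max p (Suc n) > p")
      case True then show ?thesis using nb by force
    next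
      case False then show ?thesis by simp
    qed
    finally show "sum f {..n} \<le> sum f {0..<p} + 2" by simp
  qed
  then show False using f unfolding c0plus_not_l1_def by auto
qed

lemma B4:
  fixes r :: "'a rel" and f :: "'a \<Rightarrow> nat \<Rightarrow> real"
  assumes WO: "Well_order r" and PIall: "\<And>D. PI (Restr r D)"
    and fP: "\<forall>i\<in>Field r. f i \<in> c0plus_not_l1"
    and dec: "\<forall>i j. (i,j)\<in>r \<longrightarrow> ae_le (f j) (f i)"
  shows "\<exists>b\<in>c0plus_not_l1. \<forall>i\<in>Field r. ae_le b (f i)"
proof (cases "Field r = {}")
  case True then show ?thesis using FA_in[of UNIV] by auto
next
  case False
  then obtain i0 where i0: "i0 \<in> Field r" by auto
  have fpos: "\<And>i n. i \<in> Field r \<Longrightarrow> 0 < f i n"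
    and flim: "\<And>i. i\<in>Field r \<Longrightarrow> f i \<longlonglongrightarrow> 0"
    using fP unfolding c0plus_not_l1_def by auto
  define hk where "hk i n = (LEAST k. (1/2::real)^k \<le> f i n)" for i n
  define qq where "qq i p = (LEAST q. q > p \<and> sum (f i) {p..<q} \<ge> 2)" for i p
  obtain H where H: "\<forall>i\<in>Field r. finite {n. max (hk i n) (qq i n) > H n}"
    using dominate[OF WO PIall, of "\<lambda>i n. max (hk i n) (qq i n)"] by blast
  define ell where "ell n = (1/2::real)^(H n)" for n
  have ell_pos: "0 < ell n" for n unfolding ell_def by simp
  have ell_le: "finite {n. ell n > f i n}" if i: "i \<in> Field r" for i
  proof -
    have "{n. ell n > f i n} \<subseteq> {n. max (hk i n) (qq i n) > H n}"
    proof (rule subsetI, rule ccontr)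
      fix n assume n: "n \<in> {n. ell n > f i n}" "n \<notin> {n. max (hk i n) (qq i n) > H n}"
      then have "hk i n \<le> H n" by auto
      then have "(1/2::real)^(H n) \<le> (1/2)^(hk i n)" by (intro power_decreasing) auto
      also have "(1/2::real)^(hk i n) \<le> f i n" unfolding hk_def
        by (rule LeastI_ex[OF half_pow_ex[OF fpos[OF i]]])
      finally show False using n unfolding ell_def by simp
    qed
    then show ?thesis using H i finite_subset by blast
  qed
  define t where "t = rec_nat 0 (\<lambda>m x. max (Suc x) (H x))"
  have t0: "t 0 = 0" and tS: "\<And>m. t (Suc m) = max (Suc (t m)) (H (t m))"
    unfolding t_def by simp_all
  have sm: "strict_mono t" unfolding strict_mono_Suc_iff by (simp add: tS less_max_iff_disj)
  have injt: "inj t" using strict_mono_imp_inj_on[OF sm] .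
  have blocksum: "finite {m. \<not> sum (f i) (Jb t m) \<ge> 2}" if i: "i \<in> Field r" for i
  proof -
    have "{m. \<not> sum (f i) (Jb t m) \<ge> 2} \<subseteq> t -` {n. max (hk i n) (qq i n) > H n}"
    proof (rule subsetI, rule ccontr)
      fix m assume m: "m \<in> {m. \<not> sum (f i) (Jb t m) \<ge> 2}" "m \<notin> t -` {n. max (hk i n) (qq i n) > H n}"
      then have qH: "qq i (t m) \<le> H (t m)" by auto
      have q: "qq i (t m) > t m \<and> sum (f i) {t m..<qq i (t m)} \<ge> 2"
        unfolding qq_def by (rule LeastI_ex[OF partial_sum_big[OF fP[rule_format, OF i]]])
      have "qq i (t m) \<le> t (Suc m)" using qH tS by simp
      then have "sum (f i) {t m..<qq i (t m)} \<le> sum (f i) (Jb t m)" unfolding Jb_def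
        using fpos[OF i] by (intro sum_mono2) (auto intro: less_imp_le)
      then show False using q m by simp
    qed
    moreover have "finite (t -` {n. max (hk i n) (qq i n) > H n})"
      using H i injt by (intro finite_vimageI) auto
    ultimately show ?thesis using finite_subset by blast
  qed
  have small: "finite {m. \<not> (\<forall>n\<in>Jb t m. f i n \<le> 1)}" if i: "i \<in> Field r" for i
  proof -
    have "eventually (\<lambda>n. f i n < 1) sequentially"
      using order_tendstoD(2)[OF flim[OF i]] by simp
    then obtain N where N: "\<And>n. n \<ge> N \<Longrightarrow> f i n < 1" unfolding eventually_sequentially by blast
    have "{m. \<not> (\<forall>n\<in>Jb t m. f i n \<le> 1)} \<subseteq> {..<N}"
    proof
      fix m assume "m \<in> {m. \<not> (\<forall>n\<in>Jb t m. f i n \<le> 1)}"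
      then obtain n where n: "n \<in> Jb t m" "\<not> f i n \<le> 1" by auto
      then have "n < N" using N by (meson le_less_linear less_imp_le)
      moreover have "m \<le> t m" using sm_ge[OF sm] .
      ultimately show "m \<in> {..<N}" using n(1) unfolding Jb_def by auto
    qed
    then show ?thesis using finite_subset by blast
  qed
  define Tw where "Tw i = to_nat ` Obj t (f i)" for i
  have Twinf: "infinite (Tw i)" if i: "i \<in> Field r" for i
  proof
    assume fin: "finite (Tw i)"
    then have finO: "finite (Obj t (f i))" unfolding Tw_def
      using finite_image_iff[OF inj_on_to_nat[of "Obj t (f i)"]] by simp
    let ?G = "{m. sum (f i) (Jb t m) \<ge> 2 \<and> (\<forall>n\<in>Jb t m. f i n \<le> 1)}"
    have "?G \<subseteq> fst ` Obj t (f i)"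
    proof
      fix m assume m: "m \<in> ?G"
      then have "(m, cks t (f i) m) \<in> Obj t (f i)"
        using cks_in[OF sm] fpos[OF i] by auto
      then show "m \<in> fst ` Obj t (f i)" by force
    qed
    then have "finite ?G" using finO finite_subset by blast
    then have fU: "finite (?G \<union> {m. \<not> sum (f i) (Jb t m) \<ge> 2} \<union> {m. \<not> (\<forall>n\<in>Jb t m. f i n \<le> 1)})"
      using blocksum[OF i] small[OF i] by simp
    have sU: "(UNIV :: nat set) \<subseteq> ?G \<union> {m. \<not> sum (f i) (Jb t m) \<ge> 2} \<union> {m. \<not> (\<forall>n\<in>Jb t m. f i n \<le> 1)}"
      by auto
    have "finite (UNIV :: nat set)" using finite_subset[OF sU fU] .
    then show False by simp
  qed
  have Twdec: "finite (Tw j - Tw i)" if ij: "(i,j) \<in> r" for i j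
  proof -
    have "finite (Obj t (f j) - Obj t (f i))"
      using Obj_diff[OF sm] dec ij unfolding ae_le_def by blast
    moreover have "Tw j - Tw i \<subseteq> to_nat ` (Obj t (f j) - Obj t (f i))" unfolding Tw_def by auto
    ultimately show ?thesis using finite_subset by blast
  qed
  have PIr: "PI r" using PIall[of "Field r"] by (simp add: Restr_Field)
  obtain D where D: "infinite D" "\<forall>i\<in>Field r. finite (D - Tw i)"
    using PIr unfolding PI_def
  proof (elim allE impE)
    show "(\<forall>i\<in>Field r. infinite (Tw i)) \<and> (\<forall>i j. (i,j)\<in>r \<longrightarrow> finite (Tw j - Tw i))"
      using Twinf Twdec by blast
  qed blast
  define O' where "O' = {ob \<in> Obj t (f i0). to_nat ob \<in> D}"
  have O'sub: "O' \<subseteq> Obj t (f i0)" unfolding O'_def by auto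
  have O'inf: "infinite O'"
  proof
    assume "finite O'"
    then have "finite (to_nat ` O')" by simp
    moreover have "D \<subseteq> (D - Tw i0) \<union> to_nat ` O'" unfolding O'_def Tw_def by auto
    moreover have "finite (D - Tw i0)" using D(2) i0 by blast
    ultimately have "finite ((D - Tw i0) \<union> to_nat ` O')" by simp
    then have "finite D" using finite_subset[OF \<open>D \<subseteq> (D - Tw i0) \<union> to_nat ` O'\<close>] by simp
    then show False using D(1) by simp
  qed
  define Ms where "Ms = fst ` O'"
  have Msinf: "infinite Ms"
  proof
    assume "finite Ms"
    then have "finite O'" using Obj_fst_finite[OF O'sub] unfolding Ms_def by simp
    then show False using O'inf by simp
  qed
  define ks where "ks m = (SOME k. (m,k) \<in> O')" for m
  have ks: "(m, ks m) \<in> O'" if "m \<in> Ms" for m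
  proof -
    have "\<exists>k. (m,k) \<in> O'" using that unfolding Ms_def by force
    then show ?thesis unfolding ks_def by (rule someI_ex)
  qed
  have goodi: "finite (O' - Obj t (f i))" if i: "i \<in> Field r" for i
  proof -
    have "to_nat ` (O' - Obj t (f i)) \<subseteq> D - Tw i" unfolding O'_def Tw_def by auto
    then have "finite (to_nat ` (O' - Obj t (f i)))" using D i finite_subset by blast
    then show ?thesis using finite_image_iff[OF inj_on_to_nat[of "O' - Obj t (f i)"]] by simp
  qed
  define blk where "blk n = (LEAST m. n < t (Suc m))" for n
  have blk: "n \<in> Jb t (blk n)" for n
  proof -
    have ex: "\<exists>m. n < t (Suc m)" using sm_ge[OF sm, of "Suc n"] by (intro exI[of _ n]) simp
    have a: "n < t (Suc (blk n))" unfolding blk_def by (rule LeastI_ex[OF ex])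
    have b: "t (blk n) \<le> n"
    proof (cases "blk n")
      case 0 then show ?thesis using t0 by simp
    next
      case (Suc k)
      have "\<not> n < t (Suc k)" using Suc unfolding blk_def by (metis lessI not_less_Least)
      then show ?thesis using Suc by simp
    qed
    show ?thesis using a b unfolding Jb_def by simp
  qed
  have blk_unique: "blk n = m" if "n \<in> Jb t m" for n m
  proof -
    have n1: "t m \<le> n" "n < t (Suc m)" using that unfolding Jb_def by auto
    have n2: "t (blk n) \<le> n" "n < t (Suc (blk n))" using blk[of n] unfolding Jb_def by auto
    show ?thesis
    proof (rule ccontr)
      assume "blk n \<noteq> m"
      then consider "blk n < m" | "m < blk n" by linarith
      then show False
      proof cases
        case 1
        then have "t (Suc (blk n)) \<le> t m" using sm strict_mono_less_eq by (metis Suc_leI)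
        then show False using n1 n2 by linarith
      next
        case 2
        then have "t (Suc m) \<le> t (blk n)" using sm strict_mono_less_eq by (metis Suc_leI)
        then show False using n1 n2 by linarith
      qed
    qed
  qed
  define sig where "sig n = (if blk n \<in> Ms then val (ks (blk n) ! (n - t (blk n))) else 0)" for n
  define g where "g n = max (ell n) (sig n)" for n
  have gpos: "0 < g n" for n unfolding g_def using ell_pos[of n] by simp
  have gle: "ae_le g (f i)" if i: "i \<in> Field r" for i
  proof -
    have "{n. g n > f i n} \<subseteq> {n. ell n > f i n} \<union> (\<Union>m\<in>fst ` (O' - Obj t (f i)). Jb t m)"
    proof (rule subsetI, rule ccontr)
      fix n assume n: "n \<in> {n. g n > f i n}"
        "n \<notin> {n. ell n > f i n} \<union> (\<Union>m\<in>fst ` (O' - Obj t (f i)). Jb t m)"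
      then have sg: "sig n > f i n" unfolding g_def by auto
      have "blk n \<in> Ms"
      proof (rule ccontr)
        assume "blk n \<notin> Ms"
        then have "sig n = 0" unfolding sig_def by simp
        then show False using sg fpos[OF i, of n] by simp
      qed
      then have sv: "sig n = val (ks (blk n) ! (n - t (blk n)))" unfolding sig_def by simp
      have "(blk n, ks (blk n)) \<in> O'" using ks \<open>blk n \<in> Ms\<close> by blast
      moreover have "(blk n, ks (blk n)) \<notin> O' - Obj t (f i)"
      proof
        assume "(blk n, ks (blk n)) \<in> O' - Obj t (f i)"
        then have "blk n \<in> fst ` (O' - Obj t (f i))" by force
        then show False using n(2) blk[of n] by blast
      qed
      ultimately have "(blk n, ks (blk n)) \<in> Obj t (f i)" by blast
      then have "val (ks (blk n) ! (n - t (blk n))) \<le> f i n" using blk[of n] unfolding Obj_def by auto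
      then show False using sg sv by simp
    qed
    moreover have "finite ({n. ell n > f i n} \<union> (\<Union>m\<in>fst ` (O' - Obj t (f i)). Jb t m))"
      using ell_le[OF i] goodi[OF i] unfolding Jb_def by auto
    ultimately show ?thesis unfolding ae_le_def using finite_subset by blast
  qed
  have glim: "g \<longlonglongrightarrow> 0"
  proof (rule tendsto_sandwich[of "\<lambda>_. 0" g sequentially "f i0"])
    show "\<forall>\<^sub>F n in sequentially. 0 \<le> g n" using gpos by (simp add: less_imp_le)
    have "finite {n. \<not> g n \<le> f i0 n}" using gle[OF i0] unfolding ae_le_def by (simp add: not_le)
    then show "\<forall>\<^sub>F n in sequentially. g n \<le> f i0 n"
      unfolding cofinite_eq_sequentially[symmetric] eventually_cofinite by simp
    show "f i0 \<longlonglongrightarrow> 0" using flim[OF i0] .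
  qed simp
  have gns: "\<not> summable g"
  proof
    assume "summable g"
    then obtain N where N: "\<And>m n. m \<ge> N \<Longrightarrow> norm (sum g {m..<n}) < 1/2"
      unfolding summable_Cauchy by (metis divide_pos_pos zero_less_one zero_less_numeral)
    obtain m where m: "m \<in> Ms" "m \<ge> N" using Msinf by (meson finite_nat_set_iff_bounded_le le_cases)
    have tm: "t m \<ge> N" using m(2) sm_ge[OF sm, of m] by linarith
    have inO: "(m, ks m) \<in> Obj t (f i0)" using ks[OF m(1)] O'sub by blast
    have "sum g (Jb t m) \<ge> sum (\<lambda>n. val (ks m ! (n - t m))) (Jb t m)"
    proof (rule sum_mono)
      fix n assume n: "n \<in> Jb t m"
      then have "blk n = m" by (rule blk_unique)
      then have "sig n = val (ks m ! (n - t m))" unfolding sig_def using m(1) by simp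
      then show "val (ks m ! (n - t m)) \<le> g n" unfolding g_def by simp
    qed
    moreover have "sum (\<lambda>n. val (ks m ! (n - t m))) (Jb t m) \<ge> 1/2" using inO unfolding Obj_def by auto
    moreover have "norm (sum g (Jb t m)) < 1/2" using N[OF tm, of "t (Suc m)"] unfolding Jb_def by simp
    moreover have "sum g (Jb t m) \<ge> 0" using gpos by (intro sum_nonneg) (simp add: less_imp_le)
    ultimately show False by simp
  qed
  show ?thesis
  proof (intro bexI[of _ g] ballI)
    show "g \<in> c0plus_not_l1" unfolding c0plus_not_l1_def using gpos glim gns by auto
    fix i assume "i \<in> Field r" then show "ae_le g (f i)" by (rule gle)
  qed
qed


theorem mainTheorem6:
  fixes \<kappa> :: "'a rel"
  assumes "Card_order \<kappa>"
  shows "t_le c0plus_not_l1 ae_le \<kappa> \<longleftrightarrow> t_le inf_subsets ae_subset \<kappa>"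
proof
  assume "t_le inf_subsets ae_subset \<kappa>"
  then obtain r :: "'a rel" where r: "Card_order r" "(r, \<kappa>) \<in> ordLeq" "unbounded_decr_chain inf_subsets ae_subset r"
    unfolding t_le_def by blast
  then show "t_le c0plus_not_l1 ae_le \<kappa>" unfolding t_le_def using partA by blast
next
  assume L: "t_le c0plus_not_l1 ae_le \<kappa>"
  show "t_le inf_subsets ae_subset \<kappa>"
  proof (rule ccontr)
    assume NT: "\<not> t_le inf_subsets ae_subset \<kappa>"
    have H: "PI r'" if "Card_order r'" "(r', \<kappa>) \<in> ordLeq" for r' :: "'a rel"
      unfolding PI_def
    proof (intro allI impI)
      fix A :: "'a \<Rightarrow> nat set"
      assume A: "(\<forall>i\<in>Field r'. infinite (A i)) \<and> (\<forall>i j. (i,j)\<in>r' \<longrightarrow> finite (A j - A i))"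
      show "\<exists>B. infinite B \<and> (\<forall>i\<in>Field r'. finite (B - A i))"
      proof (rule ccontr)
        assume nB: "\<not> (\<exists>B. infinite B \<and> (\<forall>i\<in>Field r'. finite (B - A i)))"
        have "Well_order r'" using that(1) card_order_on_well_order_on by blast
        then have "unbounded_decr_chain inf_subsets ae_subset r'"
          unfolding unbounded_decr_chain_def inf_subsets_def ae_subset_def
          using A nB by (intro conjI exI[of _ A]) auto
        then have "t_le inf_subsets ae_subset \<kappa>" unfolding t_le_def using that by blast
        with NT show False by simp
      qed
    qed
    from L obtain r :: "'a rel" where r: "Card_order r" "(r, \<kappa>) \<in> ordLeq" "unbounded_decr_chain c0plus_not_l1 ae_le r"
      unfolding t_le_def by blast
    have WO: "Well_order r" using r(1) card_order_on_well_order_on by blast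
    have PIall: "PI (Restr r D)" for D
    proof (rule B2[of \<kappa>, OF H])
      show "Well_order (Restr r D)" using Well_order_Restr[OF WO] .
      show "(Restr r D, \<kappa>) \<in> ordLeq" using Restr_ordLeq[OF WO] r(2) ordLeq_transitive by blast
    qed
    from r(3) obtain f where f: "\<forall>i\<in>Field r. f i \<in> c0plus_not_l1"
      "\<forall>i j. (i, j) \<in> r \<longrightarrow> ae_le (f j) (f i)"
      "\<not> (\<exists>b\<in>c0plus_not_l1. \<forall>i\<in>Field r. ae_le b (f i))"
      unfolding unbounded_decr_chain_def by blast
    show False using B4[OF WO PIall f(1) f(2)] f(3) by blast
  qed
qed


end
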